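(* Let $f_d(\mathbf{x})=\psi_{3d}(\sqrt d\,\langle\mathbf{x}^{(1)},\mathbf{x}^{(2)}\rangle)$. There are absolute constants $C_1,C_2$ such that for all $d\ge2$ and $K\in\mathbb{N}$ there is a depth-3 ReLU network $f_{d,K}$ with hidden widths at most $\omega_{d,K}:=\max(6d+2,2Kd)$ such that $\|f_d-f_{d,K}\|_{L^\infty}\le C_1\frac{d^{5/2}}{K}$ and $R_3(f_{d,K};\omega_{d,K})\le C_2d^{5/2}$.
   Context: $\mathcal{X}_d=\mathbb{S}^{d-1}\times\mathbb{S}^{d-1}\subset\mathbb{R}^{2d}$; $\mathbf{x}^{(1)},\mathbf{x}^{(2)}$ are the first and last $d$ coordinates; $\|\cdot\|_{L^\infty}$ is the sup norm over $\mathcal{X}_d$. The sawtooth $\psi_n(t)=-2n[t+1]_++2n[t-1]_++4n\sum_{j=1}^n\big((-1)^{j+n+1}[t-\tfrac{2j-1}{2n}]_++(-1)^{j+n}[t+\tfrac{2j-1}{2n}]_+\big)$. A depth-3 network is $f_\phi(\mathbf{x})=\mathbf{w}_3^\top[\mathbf{W}_2[\mathbf{W}_1\mathbf{x}+\mathbf{b}_1]_++\mathbf{b}_2]_++b_3$; $R_3(f;\omega)=\inf\{\|\phi\|^2/3: f_\phi=f\text{ on }\mathcal{X}_d,\ \text{hidden widths}\le\omega\}$ with $\|\phi\|^2$ the sum of squares of all weights and biases. *)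

theory Defs
  imports Complex_Main
begin

text \<open>Points of R^(2d) are functions nat => real; coordinates 0..d-1 form x^(1),
  coordinates d..2d-1 form x^(2), all other coordinates are zero.\<close>

definition relu :: "real \<Rightarrow> real" where
  "relu t = max t 0"

definition Xd :: "nat \<Rightarrow> (nat \<Rightarrow> real) set" where
  "Xd d = {x. (\<Sum>i<d. (x i)\<^sup>2) = 1 \<and> (\<Sum>i<d. (x (d + i))\<^sup>2) = 1 \<and> (\<forall>i\<ge>2*d. x i = 0)}"

definition inner12 :: "nat \<Rightarrow> (nat \<Rightarrow> real) \<Rightarrow> real" where
  "inner12 d x = (\<Sum>i<d. x i * x (d + i))"

definition sawtooth :: "nat \<Rightarrow> real \<Rightarrow> real" where
  "sawtooth n t = - 2 * real n * relu (t + 1) + 2 * real n * relu (t - 1)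
     + 4 * real n * (\<Sum>j=1..n.
         (-1) ^ (j + n + 1) * relu (t - (2 * real j - 1) / (2 * real n))
       + (-1) ^ (j + n) * relu (t + (2 * real j - 1) / (2 * real n)))"

definition f_target :: "nat \<Rightarrow> (nat \<Rightarrow> real) \<Rightarrow> real" where
  "f_target d x = sawtooth (3 * d) (sqrt (real d) * inner12 d x)"

text \<open>Parameters of a depth-3 network with input dimension 2d and hidden widths m1, m2:
  (W1, b1, W2, b2, w3, b3) with W1 : m1 x 2d, b1 : m1, W2 : m2 x m1, b2 : m2, w3 : m2,
  b3 scalar; only the entries in these index ranges are meaningful.\<close>

type_synonym params =
  "(nat \<Rightarrow> nat \<Rightarrow> real) \<times> (nat \<Rightarrow> real) \<times> (nat \<Rightarrow> nat \<Rightarrow> real) \<times> (nat \<Rightarrow> real) \<times> (nat \<Rightarrow> real) \<times> real"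

fun net_eval :: "nat \<Rightarrow> nat \<Rightarrow> nat \<Rightarrow> params \<Rightarrow> (nat \<Rightarrow> real) \<Rightarrow> real" where
  "net_eval d m1 m2 (W1, b1, W2, b2, w3, b3) x =
     (\<Sum>k<m2. w3 k * relu ((\<Sum>j<m1. W2 k j * relu ((\<Sum>i<2*d. W1 j i * x i) + b1 j)) + b2 k)) + b3"

fun param_norm2 :: "nat \<Rightarrow> nat \<Rightarrow> nat \<Rightarrow> params \<Rightarrow> real" where
  "param_norm2 d m1 m2 (W1, b1, W2, b2, w3, b3) =
     (\<Sum>j<m1. \<Sum>i<2*d. (W1 j i)\<^sup>2) + (\<Sum>j<m1. (b1 j)\<^sup>2)
   + (\<Sum>k<m2. \<Sum>j<m1. (W2 k j)\<^sup>2) + (\<Sum>k<m2. (b2 k)\<^sup>2)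
   + (\<Sum>k<m2. (w3 k)\<^sup>2) + b3\<^sup>2"

definition R3 :: "nat \<Rightarrow> ((nat \<Rightarrow> real) \<Rightarrow> real) \<Rightarrow> nat \<Rightarrow> real" where
  "R3 d f \<omega> = Inf {param_norm2 d m1 m2 \<phi> / 3 | m1 m2 \<phi>.
      m1 \<le> \<omega> \<and> m2 \<le> \<omega> \<and> (\<forall>x\<in>Xd d. net_eval d m1 m2 \<phi> x = f x)}"

end

theory Submission
  imports Defs
begin

lemma relu_nonneg: "relu z \<ge> 0" by (simp add: relu_def)
lemma relu_pos_mult: "c > 0 \<Longrightarrow> relu (c * z) = c * relu z"
  unfolding relu_def by (cases "z \<ge> 0") (simp_all add: mult_nonpos_nonneg max_def mult_le_0_iff)
lemma relu_lip: "\<bar>relu a - relu b\<bar> \<le> \<bar>a - b\<bar>"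
  by (simp add: relu_def max_def abs_if)
lemma relu_sq_split: "(relu u)\<^sup>2 + (relu (-u))\<^sup>2 = u\<^sup>2"
  by (simp add: relu_def max_def power2_eq_square)
lemma step_bound:
  fixes h z :: real assumes "h \<ge> 0"
  shows "\<bar>(relu z)\<^sup>2 - (relu (z - h))\<^sup>2 - 2 * h * relu z\<bar> \<le> h\<^sup>2"
proof (cases "z \<le> 0")
  case True then show ?thesis using assms by (simp add: relu_def max_def)
next
  case False
  show ?thesis
  proof (cases "z \<le> h")
    case True
    then have "relu (z - h) = 0" "relu z = z" using False by (auto simp: relu_def)
    have a: "z * (z - 2*h) \<le> 0" using True False by (intro mult_nonneg_nonpos) auto
    have b: "0 \<le> (z - h)\<^sup>2" by simp
    show ?thesis unfolding \<open>relu (z - h) = 0\<close> \<open>relu z = z\<close> using a b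
      by (simp add: power2_eq_square algebra_simps abs_le_iff)
  next
    case False2: False
    have e1: "relu (z - h) = z - h" and e2: "relu z = z" using False False2 by (auto simp: relu_def)
    show ?thesis unfolding e1 e2 by (simp add: power2_eq_square algebra_simps)
  qed
qed

lemma F_approx:
  fixes u :: real assumes K: "K \<ge> 1" and u: "u \<le> 2"
  shows "\<bar>(\<Sum>k<K. 4 / real K * relu (u - 2 * real k / real K)) - (relu u)\<^sup>2\<bar> \<le> 4 / real K"
proof -
  define h where "h = 2 / real K"
  have h0: "h \<ge> 0" by (simp add: h_def)
  define f where "f k = (relu (u - real k * h))\<^sup>2" for k
  have tel: "(\<Sum>k<K. f k - f (Suc k)) = f 0 - f K" by (rule sum_lessThan_telescope')
  have fK: "f K = 0" using K u by (simp add: f_def h_def relu_def)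
  have f0: "f 0 = (relu u)\<^sup>2" by (simp add: f_def)
  have eq: "(\<Sum>k<K. 4 / real K * relu (u - 2 * real k / real K)) - (relu u)\<^sup>2
      = (\<Sum>k<K. 2 * h * relu (u - real k * h) - (f k - f (Suc k)))"
    using tel fK f0 by (simp add: sum_subtractf h_def mult.commute)
  have "\<bar>\<dots>\<bar> \<le> (\<Sum>k<K. \<bar>2 * h * relu (u - real k * h) - (f k - f (Suc k))\<bar>)"
    by (rule sum_abs)
  also have "\<dots> \<le> (\<Sum>k<K. h\<^sup>2)"
  proof (rule sum_mono)
    fix k assume "k \<in> {..<K}"
    have "u - real (Suc k) * h = (u - real k * h) - h" by (simp add: algebra_simps)
    then have e: "f (Suc k) = (relu ((u - real k * h) - h))\<^sup>2" unfolding f_def by metis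
    have "f k = (relu (u - real k * h))\<^sup>2" by (simp add: f_def)
    then show "\<bar>2 * h * relu (u - real k * h) - (f k - f (Suc k))\<bar> \<le> h\<^sup>2"
      using step_bound[OF h0, of "u - real k * h"] e by (smt (verit))
  qed
  also have "\<dots> = 4 / real K" using K by (simp add: h_def power2_eq_square)
  finally show ?thesis using eq by simp
qed



lemma relu_sum_lip_aux:
  fixes M :: "'a set" and a \<tau> :: "'a \<Rightarrow> real"
  assumes fin: "finite M" and L: "\<And>u. \<bar>\<Sum>m\<in>{m\<in>M. \<tau> m \<le> u}. a m\<bar> \<le> L"
  shows "s \<le> t \<Longrightarrow> card {m\<in>M. s < \<tau> m \<and> \<tau> m < t} = N \<Longrightarrow>
    \<bar>(\<Sum>m\<in>M. a m * relu (t - \<tau> m)) - (\<Sum>m\<in>M. a m * relu (s - \<tau> m))\<bar> \<le> L * (t - s)"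
proof (induction N arbitrary: s t rule: less_induct)
  case (less N)
  define B where "B = {m\<in>M. s < \<tau> m \<and> \<tau> m < t}"
  have finB: "finite B" using fin by (simp add: B_def)
  show ?case
  proof (cases "B = {}")
    case True
    have "(\<Sum>m\<in>M. a m * relu (t - \<tau> m)) - (\<Sum>m\<in>M. a m * relu (s - \<tau> m))
        = (\<Sum>m\<in>M. (if \<tau> m \<le> s then a m * (t - s) else 0))"
      unfolding sum_subtractf[symmetric]
    proof (rule sum.cong[OF refl])
      fix m assume m: "m \<in> M"
      then have "\<tau> m \<le> s \<or> t \<le> \<tau> m" using True unfolding B_def by force
      then show "a m * relu (t - \<tau> m) - a m * relu (s - \<tau> m) = (if \<tau> m \<le> s then a m * (t - s) else 0)"
        using less.prems(1) by (auto simp: relu_def algebra_simps)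
    qed
    also have "\<dots> = (t - s) * (\<Sum>m\<in>{m\<in>M. \<tau> m \<le> s}. a m)"
      using fin by (simp add: sum.inter_filter[symmetric] sum_distrib_left mult.commute if_distrib cong: if_cong)
    finally have eq: "(\<Sum>m\<in>M. a m * relu (t - \<tau> m)) - (\<Sum>m\<in>M. a m * relu (s - \<tau> m))
        = (t - s) * (\<Sum>m\<in>{m\<in>M. \<tau> m \<le> s}. a m)" .
    have "\<bar>(t - s) * (\<Sum>m\<in>{m\<in>M. \<tau> m \<le> s}. a m)\<bar> \<le> (t - s) * L"
      using less.prems(1) L[of s] by (simp add: abs_mult mult_left_mono)
    then show ?thesis using eq by (simp add: mult.commute)
  next
    case False
    then obtain m0 where m0: "m0 \<in> B" by blast
    define b where "b = \<tau> m0"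
    have sb: "s < b" "b < t" using m0 by (auto simp: B_def b_def)
    have c1: "card {m\<in>M. s < \<tau> m \<and> \<tau> m < b} < N"
    proof -
      have "{m\<in>M. s < \<tau> m \<and> \<tau> m < b} \<subset> B" using m0 sb by (auto simp: B_def b_def)
      then show ?thesis using finB less.prems(2) B_def psubset_card_mono by auto
    qed
    have c2: "card {m\<in>M. b < \<tau> m \<and> \<tau> m < t} < N"
    proof -
      have "{m\<in>M. b < \<tau> m \<and> \<tau> m < t} \<subset> B" using m0 sb by (auto simp: B_def b_def)
      then show ?thesis using finB less.prems(2) B_def psubset_card_mono by auto
    qed

    have "\<bar>(\<Sum>m\<in>M. a m * relu (b - \<tau> m)) - (\<Sum>m\<in>M. a m * relu (s - \<tau> m))\<bar> \<le> L * (b - s)"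
      using less.IH[OF c1, of s b] sb by simp
    moreover have "\<bar>(\<Sum>m\<in>M. a m * relu (t - \<tau> m)) - (\<Sum>m\<in>M. a m * relu (b - \<tau> m))\<bar> \<le> L * (t - b)"
      using less.IH[OF c2, of b t] sb by simp
    ultimately show ?thesis by (simp add: algebra_simps)
  qed
qed

lemma relu_sum_lip:
  fixes M :: "'a set" and a \<tau> :: "'a \<Rightarrow> real"
  assumes fin: "finite M" and L: "\<And>u. \<bar>\<Sum>m\<in>{m\<in>M. \<tau> m \<le> u}. a m\<bar> \<le> L"
  shows "\<bar>(\<Sum>m\<in>M. a m * relu (t - \<tau> m)) - (\<Sum>m\<in>M. a m * relu (s - \<tau> m))\<bar> \<le> L * \<bar>t - s\<bar>"
proof (cases "s \<le> t")
  case True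
  then show ?thesis using relu_sum_lip_aux[OF fin L True refl] by simp
next
  case False
  then show ?thesis using relu_sum_lip_aux[OF fin L, of t s, OF _ refl] by (simp add: abs_minus_commute)
qed

lemma alt_ivl: "a \<le> b \<Longrightarrow> 2 * (\<Sum>j\<in>{a..<b}. (-1::real) ^ j) = (-1) ^ a - (-1) ^ b"
proof (induction b rule: dec_induct)
  case base then show ?case by simp
next
  case (step n) then show ?case by (simp add: algebra_simps)
qed

lemma alt_convex:
  fixes S :: "nat set"
  assumes fin: "finite S" and cv: "\<And>x y z. x \<in> S \<Longrightarrow> z \<in> S \<Longrightarrow> x \<le> y \<Longrightarrow> y \<le> z \<Longrightarrow> y \<in> S"
  shows "\<bar>\<Sum>j\<in>S. (-1::real) ^ j\<bar> \<le> 1"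
proof (cases "S = {}")
  case True then show ?thesis by simp
next
  case False
  have "S = {Min S..<Suc (Max S)}"
  proof
    show "S \<subseteq> {Min S..<Suc (Max S)}" using fin by (auto simp: less_Suc_eq_le)
    show "{Min S..<Suc (Max S)} \<subseteq> S"
    proof
      fix y assume "y \<in> {Min S..<Suc (Max S)}"
      then show "y \<in> S" using cv[of "Min S" "Max S" y] Min_in Max_in fin False by auto
    qed
  qed
  moreover have "Min S \<le> Suc (Max S)" using fin False by (simp add: le_SucI)
  ultimately have "2 * (\<Sum>j\<in>S. (-1::real) ^ j) = (-1) ^ Min S - (-1) ^ Suc (Max S)"
    using alt_ivl by metis
  moreover have "\<bar>(-1::real) ^ Min S - (-1) ^ Suc (Max S)\<bar> \<le> 2"
    by (cases "even (Min S)"; cases "even (Max S)") auto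
  ultimately show ?thesis by linarith
qed


definition cc :: "nat \<Rightarrow> nat \<Rightarrow> real" where
  "cc n j = (2 * real j - 1) / (2 * real n)"

lemma cc_mono: "x \<le> y \<Longrightarrow> cc n x \<le> cc n y"
  unfolding cc_def by (rule divide_right_mono) auto

lemma alt_part:
  fixes P :: "nat \<Rightarrow> bool"
  assumes cv: "\<And>x y z. P x \<Longrightarrow> P z \<Longrightarrow> x \<le> y \<Longrightarrow> y \<le> z \<Longrightarrow> P y"
  shows "\<bar>\<Sum>j\<in>{j\<in>{1..n}. P j}. (-1::real) ^ (j + p)\<bar> \<le> 1"
proof -
  have "(\<Sum>j\<in>{j\<in>{1..n}. P j}. (-1::real) ^ (j + p)) = (-1) ^ p * (\<Sum>j\<in>{j\<in>{1..n}. P j}. (-1::real) ^ j)"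
    by (simp add: sum_distrib_left power_add mult.commute)
  moreover have "\<bar>\<Sum>j\<in>{j\<in>{1..n}. P j}. (-1::real) ^ j\<bar> \<le> 1"
    by (rule alt_convex) (auto intro: cv)
  ultimately show ?thesis by (simp add: abs_mult)
qed

lemma saw_split:
  "sawtooth n t = - 2 * real n * relu (t + 1) + 2 * real n * relu (t - 1)
     + 4 * real n * ((\<Sum>j\<in>{1..n}. (-1) ^ (j + n + 1) * relu (t - cc n j))
                   + (\<Sum>j\<in>{1..n}. (-1) ^ (j + n) * relu (t - (- cc n j))))"
  unfolding sawtooth_def cc_def diff_minus_eq_add sum.distrib by (rule refl)

lemma saw_lip: "\<bar>sawtooth n t - sawtooth n s\<bar> \<le> 12 * real n * \<bar>t - s\<bar>"
proof -
  have g1: "\<bar>(\<Sum>j\<in>{1..n}. (-1) ^ (j + n + 1) * relu (t - cc n j)) - (\<Sum>j\<in>{1..n}. (-1) ^ (j + n + 1) * relu (s - cc n j))\<bar> \<le> 1 * \<bar>t - s\<bar>"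
  proof (rule relu_sum_lip)
    fix u
    show "\<bar>\<Sum>j\<in>{j\<in>{1..n}. cc n j \<le> u}. (-1::real) ^ (j + n + 1)\<bar> \<le> 1"
    proof -
      have cv: "\<And>x y z. cc n x \<le> u \<Longrightarrow> cc n z \<le> u \<Longrightarrow> x \<le> y \<Longrightarrow> y \<le> z \<Longrightarrow> cc n y \<le> u"
        using cc_mono order_trans by blast
      show ?thesis using alt_part[OF cv, where n=n and p="n+1"] by (simp add: add.assoc)
    qed
  qed simp
  have g2: "\<bar>(\<Sum>j\<in>{1..n}. (-1) ^ (j + n) * relu (t - (- cc n j))) - (\<Sum>j\<in>{1..n}. (-1) ^ (j + n) * relu (s - (- cc n j)))\<bar> \<le> 1 * \<bar>t - s\<bar>"
  proof (rule relu_sum_lip)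
    fix u
    show "\<bar>\<Sum>j\<in>{j\<in>{1..n}. - cc n j \<le> u}. (-1::real) ^ (j + n)\<bar> \<le> 1"
    proof -
      have cv: "\<And>x y z. - cc n x \<le> u \<Longrightarrow> - cc n z \<le> u \<Longrightarrow> x \<le> y \<Longrightarrow> y \<le> z \<Longrightarrow> - cc n y \<le> u"
        by (meson cc_mono neg_le_iff_le order_trans)
      show ?thesis using alt_part[OF cv, where n=n and p=n] by simp
    qed
  qed simp
  have r1: "\<bar>relu (t + 1) - relu (s + 1)\<bar> \<le> \<bar>t - s\<bar>" using relu_lip[of "t+1" "s+1"] by simp
  have r2: "\<bar>relu (t - 1) - relu (s - 1)\<bar> \<le> \<bar>t - s\<bar>" using relu_lip[of "t-1" "s-1"] by simp
  define A where "A = (\<Sum>j\<in>{1..n}. (-1) ^ (j + n + 1) * relu (t - cc n j)) - (\<Sum>j\<in>{1..n}. (-1) ^ (j + n + 1) * relu (s - cc n j))"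
  define B where "B = (\<Sum>j\<in>{1..n}. (-1) ^ (j + n) * relu (t - (- cc n j))) - (\<Sum>j\<in>{1..n}. (-1) ^ (j + n) * relu (s - (- cc n j)))"
  have "sawtooth n t - sawtooth n s = - 2 * real n * (relu (t + 1) - relu (s + 1)) + 2 * real n * (relu (t - 1) - relu (s - 1)) + 4 * real n * (A + B)"
    unfolding saw_split A_def B_def by (simp add: algebra_simps)
  also have "\<bar>\<dots>\<bar> \<le> 2 * real n * \<bar>relu (t + 1) - relu (s + 1)\<bar> + 2 * real n * \<bar>relu (t - 1) - relu (s - 1)\<bar> + 4 * real n * (\<bar>A\<bar> + \<bar>B\<bar>)"
  proof -
    have "\<bar>A + B\<bar> \<le> \<bar>A\<bar> + \<bar>B\<bar>" by (rule abs_triangle_ineq)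
    then have h: "\<bar>4 * real n * (A + B)\<bar> \<le> 4 * real n * (\<bar>A\<bar> + \<bar>B\<bar>)"
      by (simp add: abs_mult mult_left_mono)
    have h1: "\<bar>- 2 * real n * (relu (t + 1) - relu (s + 1))\<bar> = 2 * real n * \<bar>relu (t + 1) - relu (s + 1)\<bar>"
      by (simp add: abs_mult)
    have h2: "\<bar>2 * real n * (relu (t - 1) - relu (s - 1))\<bar> = 2 * real n * \<bar>relu (t - 1) - relu (s - 1)\<bar>"
      by (simp add: abs_mult)
    show ?thesis using h h1 h2 abs_triangle_ineq[of "- 2 * real n * (relu (t + 1) - relu (s + 1)) + 2 * real n * (relu (t - 1) - relu (s - 1))" "4 * real n * (A + B)"]
      abs_triangle_ineq[of "- 2 * real n * (relu (t + 1) - relu (s + 1))" "2 * real n * (relu (t - 1) - relu (s - 1))"]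
      by linarith
  qed
  also have "\<dots> \<le> 2 * real n * \<bar>t - s\<bar> + 2 * real n * \<bar>t - s\<bar> + 4 * real n * (\<bar>t - s\<bar> + \<bar>t - s\<bar>)"
    using g1 g2 r1 r2 unfolding A_def[symmetric] B_def[symmetric]
    by (intro add_mono mult_left_mono) auto
  finally show ?thesis by (simp add: algebra_simps)
qed

lemma sum_add_split: "(\<Sum>j<m+b. g j) = (\<Sum>j<m. g j) + (\<Sum>r<b. g (m + r))"
  for g :: "nat \<Rightarrow> real"
  by (induction b) simp_all

lemma sum_block: "(\<Sum>j<a*b. g j) = (\<Sum>i<a. \<Sum>r<b. g (i*b + r))"
  for g :: "nat \<Rightarrow> real"
proof (induction a)
  case 0 then show ?case by simp
next
  case (Suc a)
  have "(\<Sum>j<Suc a * b. g j) = (\<Sum>j<a*b + b. g j)" by (simp add: add.commute)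
  also have "\<dots> = (\<Sum>j<a*b. g j) + (\<Sum>r<b. g (a*b + r))" by (rule sum_add_split)
  finally show ?case using Suc by simp
qed

definition sawA :: "nat \<Rightarrow> nat \<Rightarrow> real" where
  "sawA n m = (if m < 2*n then (if even m then 4 * real n * (-1) ^ (m div 2 + 1 + n + 1)
      else 4 * real n * (-1) ^ (m div 2 + 1 + n)) else if m = 2*n then - 2 * real n else 2 * real n)"
definition sawT :: "nat \<Rightarrow> nat \<Rightarrow> real" where
  "sawT n m = (if m < 2*n then (if even m then cc n (m div 2 + 1) else - cc n (m div 2 + 1))
      else if m = 2*n then -1 else 1)"

lemma saw_net: "sawtooth n t = (\<Sum>m<2*n+2. sawA n m * relu (t - sawT n m))"
proof -
  define F where "F m = sawA n m * relu (t - sawT n m)" for m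
  have "(\<Sum>m<2*n+2. F m) = (\<Sum>m<n*2. F m) + F (2*n) + F (2*n+1)"
    by (simp add: mult.commute)
  also have "(\<Sum>m<n*2. F m) = (\<Sum>j<n. \<Sum>r<2. F (j*2 + r))" by (rule sum_block)
  also have "\<dots> = (\<Sum>j<n. F (j*2) + F (j*2+1))" by (simp add: numeral_2_eq_2)
  also have "\<dots> = (\<Sum>j<n. (-1) ^ (Suc j + n + 1) * (4 * real n) * relu (t - cc n (Suc j))
        + (-1) ^ (Suc j + n) * (4 * real n) * relu (t - (- cc n (Suc j))))"
    by (rule sum.cong) (auto simp: F_def sawA_def sawT_def)
  also have "\<dots> = 4 * real n * ((\<Sum>j\<in>{1..n}. (-1) ^ (j + n + 1) * relu (t - cc n j))
                   + (\<Sum>j\<in>{1..n}. (-1) ^ (j + n) * relu (t - (- cc n j))))"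
  proof -
    define G1 where "G1 j = (-1) ^ (j + n + 1) * relu (t - cc n j)" for j
    define G2 where "G2 j = (-1) ^ (j + n) * relu (t - (- cc n j))" for j
    have e1: "(\<Sum>j\<in>{1..n}. G1 j) = (\<Sum>j<n. G1 (Suc j))"
      using sum.atLeast1_atMost_eq[of G1 n] by (simp add: One_nat_def)
    have e2: "(\<Sum>j\<in>{1..n}. G2 j) = (\<Sum>j<n. G2 (Suc j))"
      using sum.atLeast1_atMost_eq[of G2 n] by (simp add: One_nat_def)
    have "(\<Sum>j<n. (-1) ^ (Suc j + n + 1) * (4 * real n) * relu (t - cc n (Suc j))
        + (-1) ^ (Suc j + n) * (4 * real n) * relu (t - (- cc n (Suc j))))
        = 4 * real n * ((\<Sum>j<n. G1 (Suc j)) + (\<Sum>j<n. G2 (Suc j)))"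
      unfolding G1_def G2_def sum_distrib_left sum.distrib[symmetric] distrib_left
      by (rule sum.cong) (simp_all only: mult_ac)
    then have "(\<Sum>j<n. (-1) ^ (Suc j + n + 1) * (4 * real n) * relu (t - cc n (Suc j))
        + (-1) ^ (Suc j + n) * (4 * real n) * relu (t - (- cc n (Suc j))))
        = 4 * real n * ((\<Sum>j\<in>{1..n}. G1 j) + (\<Sum>j\<in>{1..n}. G2 j))" unfolding e1 e2 .
    then show ?thesis by (simp only: G1_def G2_def)
  qed
  finally show ?thesis unfolding saw_split F_def[symmetric]
    by (simp add: F_def sawA_def sawT_def algebra_simps)
qed


definition qq :: "nat \<Rightarrow> real" where "qq d = sqrt (sqrt (real d))"
definition al :: "nat \<Rightarrow> nat \<Rightarrow> real" where "al d K = sqrt (qq d ^ 5 / real K)"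
definition iI :: "nat \<Rightarrow> nat \<Rightarrow> nat" where "iI K j = j div (2*K)"
definition sG :: "nat \<Rightarrow> nat \<Rightarrow> real" where "sG K j = (if j mod (2*K) < K then 1 else -1)"
definition kK :: "nat \<Rightarrow> nat \<Rightarrow> nat" where "kK K j = j mod K"
definition zz :: "nat \<Rightarrow> nat \<Rightarrow> nat \<Rightarrow> (nat \<Rightarrow> real) \<Rightarrow> real" where
  "zz d K j x = sG K j * (x (iI K j) + x (d + iI K j)) - 2 * real (kK K j) / real K"
definition SS :: "nat \<Rightarrow> nat \<Rightarrow> (nat \<Rightarrow> real) \<Rightarrow> real" where
  "SS d K x = 2 * sqrt (real d) / real K * (\<Sum>j<d*(2*K). relu (zz d K j x)) - sqrt (real d)"
definition phi :: "nat \<Rightarrow> nat \<Rightarrow> params" where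
  "phi d K = ((\<lambda>j i. if i = iI K j \<or> i = d + iI K j then al d K * sG K j else 0),
     (\<lambda>j. - al d K * (2 * real (kK K j) / real K)),
     (\<lambda>m j. 2 * qq d ^ 3 / (real K * al d K)),
     (\<lambda>m. - qq d * (sqrt (real d) + sawT (3*d) m)),
     (\<lambda>m. sawA (3*d) m / qq d), 0)"

lemma qq_pos: "d \<ge> 1 \<Longrightarrow> qq d > 0" by (simp add: qq_def)
lemma qq_sq: "qq d ^ 2 = sqrt (real d)" by (simp add: qq_def)
lemma qq_4: "qq d ^ 4 = real d"
proof -
  have "qq d ^ 4 = (qq d ^ 2) ^ 2" by simp
  then show ?thesis by (simp add: qq_sq)
qed
lemma al_pos: "d \<ge> 1 \<Longrightarrow> K \<ge> 1 \<Longrightarrow> al d K > 0" by (simp add: al_def qq_pos)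
lemma al_sq: "d \<ge> 1 \<Longrightarrow> al d K ^ 2 = qq d ^ 5 / real K"
  using qq_pos[of d] by (simp add: al_def)

lemma iI_less: "j < d*(2*K) \<Longrightarrow> iI K j < d"
  unfolding iI_def by (simp add: less_mult_imp_div_less)

lemma layer1:
  assumes j: "j < d*(2*K)"
  shows "(\<Sum>i<2*d. (if i = iI K j \<or> i = d + iI K j then al d K * sG K j else 0) * x i)
     + - al d K * (2 * real (kK K j) / real K) = al d K * zz d K j x"
proof -
  let ?a = "iI K j"
  have a: "?a < d" using iI_less[OF j] .
  have "(\<Sum>i<2*d. (if i = ?a \<or> i = d + ?a then al d K * sG K j else 0) * x i)
      = (\<Sum>i\<in>{i\<in>{..<2*d}. i = ?a \<or> i = d + ?a}. al d K * sG K j * x i)"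
  proof -
    have "(\<Sum>i<2*d. (if i = ?a \<or> i = d + ?a then al d K * sG K j else 0) * x i)
       = (\<Sum>i<2*d. (if i = ?a \<or> i = d + ?a then al d K * sG K j * x i else 0))"
      by (rule sum.cong) auto
    also have "\<dots> = (\<Sum>i\<in>{i\<in>{..<2*d}. i = ?a \<or> i = d + ?a}. al d K * sG K j * x i)"
      by (rule sum.inter_filter[symmetric]) simp
    finally show ?thesis .
  qed
  also have "{i\<in>{..<2*d}. i = ?a \<or> i = d + ?a} = {?a, d + ?a}" using a by auto
  also have "(\<Sum>i\<in>{?a, d + ?a}. al d K * sG K j * x i) = al d K * sG K j * (x ?a + x (d + ?a))"
    using a by (simp add: algebra_simps)
  finally show ?thesis by (simp add: zz_def algebra_simps)
qed

lemma net_is_saw: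
  assumes d: "d \<ge> 1" and K: "K \<ge> 1"
  shows "net_eval d (d*(2*K)) (2*(3*d)+2) (phi d K) x = sawtooth (3*d) (SS d K x)"
proof -
  let ?q = "qq d" and ?a = "al d K"
  have q: "?q > 0" using qq_pos d by simp
  have a: "?a > 0" using al_pos d K by simp
  have inner: "(\<Sum>j<d*(2*K). 2 * ?q ^ 3 / (real K * ?a) *
        relu ((\<Sum>i<2*d. (if i = iI K j \<or> i = d + iI K j then ?a * sG K j else 0) * x i)
          + - ?a * (2 * real (kK K j) / real K)))
      = 2 * ?q ^ 3 / real K * (\<Sum>j<d*(2*K). relu (zz d K j x))"
    unfolding sum_distrib_left
  proof (rule sum.cong[OF refl])
    fix j assume "j \<in> {..<d*(2*K)}"
    then have j: "j < d*(2*K)" by simp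
    show "2 * ?q ^ 3 / (real K * ?a) *
        relu ((\<Sum>i<2*d. (if i = iI K j \<or> i = d + iI K j then ?a * sG K j else 0) * x i)
          + - ?a * (2 * real (kK K j) / real K)) = 2 * ?q ^ 3 / real K * relu (zz d K j x)"
      unfolding layer1[OF j] relu_pos_mult[OF a] using a by simp
  qed
  have "net_eval d (d*(2*K)) (2*(3*d)+2) (phi d K) x
     = (\<Sum>m<2*(3*d)+2. sawA (3*d) m / ?q * relu (2 * ?q ^ 3 / real K * (\<Sum>j<d*(2*K). relu (zz d K j x))
          + - ?q * (sqrt (real d) + sawT (3*d) m)))"
    unfolding phi_def net_eval.simps inner by simp
  also have "\<dots> = (\<Sum>m<2*(3*d)+2. sawA (3*d) m * relu (SS d K x - sawT (3*d) m))"
  proof (rule sum.cong[OF refl])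
    fix m
    have "2 * ?q ^ 3 / real K * (\<Sum>j<d*(2*K). relu (zz d K j x)) + - ?q * (sqrt (real d) + sawT (3*d) m)
        = ?q * (SS d K x - sawT (3*d) m)"
    proof -
      have "?q ^ 3 = ?q * sqrt (real d)" using qq_sq[of d] by (simp add: power3_eq_cube power2_eq_square)
      then show ?thesis unfolding SS_def by (simp add: algebra_simps)
    qed
    then show "sawA (3*d) m / ?q * relu (2 * ?q ^ 3 / real K * (\<Sum>j<d*(2*K). relu (zz d K j x))
          + - ?q * (sqrt (real d) + sawT (3*d) m)) = sawA (3*d) m * relu (SS d K x - sawT (3*d) m)"
      using q by (simp add: relu_pos_mult)
  qed
  also have "\<dots> = sawtooth (3*d) (SS d K x)" by (rule saw_net[symmetric])
  finally show ?thesis .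
qed


lemma Xd_bound:
  assumes x: "x \<in> Xd d" and i: "i < d"
  shows "\<bar>x i\<bar> \<le> 1" "\<bar>x (d + i)\<bar> \<le> 1"
proof -
  have "(x i)\<^sup>2 \<le> (\<Sum>i<d. (x i)\<^sup>2)" using i by (intro member_le_sum) auto
  then have "(x i)\<^sup>2 \<le> 1" using x by (simp add: Xd_def)
  then show "\<bar>x i\<bar> \<le> 1" by (simp add: abs_square_le_1)
  have "(x (d + i))\<^sup>2 \<le> (\<Sum>i<d. (x (d + i))\<^sup>2)" using i by (intro member_le_sum[where f = "\<lambda>i. (x (d + i))\<^sup>2"]) auto
  then have "(x (d + i))\<^sup>2 \<le> 1" using x by (simp add: Xd_def)
  then show "\<bar>x (d + i)\<bar> \<le> 1" by (simp add: abs_square_le_1)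
qed

lemma blk_sum:
  assumes K: "K \<ge> 1"
  shows "(\<Sum>j<d*(2*K). relu (zz d K j x)) =
    (\<Sum>i<d. (\<Sum>k<K. relu ((x i + x (d + i)) - 2 * real k / real K))
           + (\<Sum>k<K. relu (- (x i + x (d + i)) - 2 * real k / real K)))"
proof -
  have "(\<Sum>j<d*(2*K). relu (zz d K j x)) = (\<Sum>i<d. \<Sum>r<2*K. relu (zz d K (i*(2*K) + r) x))"
    by (rule sum_block)
  also have "\<dots> = (\<Sum>i<d. (\<Sum>r<K. relu (zz d K (i*(2*K) + r) x)) + (\<Sum>r<K. relu (zz d K (i*(2*K) + (K + r)) x)))"
    by (rule sum.cong[OF refl]) (simp add: mult_2 sum_add_split)
  also have "\<dots> = (\<Sum>i<d. (\<Sum>k<K. relu ((x i + x (d + i)) - 2 * real k / real K))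
           + (\<Sum>k<K. relu (- (x i + x (d + i)) - 2 * real k / real K)))"
  proof (rule sum.cong[OF refl])
    fix i
    have e1: "zz d K (i*(2*K) + r) x = (x i + x (d + i)) - 2 * real r / real K" if r: "r < K" for r
    proof -
      have eq: "i*(2*K) + r = r + (2*i) * K" by (simp add: algebra_simps)
      have "(r + (2*i) * K) mod K = r" using r by (metis mod_mult_self1 mod_less)
      then have m: "(i*(2*K) + r) mod K = r" unfolding eq .
      have dv: "(i*(2*K) + r) div (2*K) = i" using r by simp
      have md: "(i*(2*K) + r) mod (2*K) = r" using r by simp
      show ?thesis unfolding zz_def iI_def sG_def kK_def m dv md using r by simp
    qed
    have e2: "zz d K (i*(2*K) + (K + r)) x = - (x i + x (d + i)) - 2 * real r / real K" if r: "r < K" for r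
    proof -
      have eq: "i*(2*K) + (K + r) = r + (2*i+1) * K" by (simp add: algebra_simps)
      have "(r + (2*i+1) * K) mod K = r" using r by (metis mod_mult_self1 mod_less)
      then have m: "(i*(2*K) + (K + r)) mod K = r" unfolding eq .
      have dv: "(i*(2*K) + (K + r)) div (2*K) = i" using r by simp
      have md: "(i*(2*K) + (K + r)) mod (2*K) = K + r" using r by simp
      show ?thesis unfolding zz_def iI_def sG_def kK_def m dv md using r by simp
    qed
    show "(\<Sum>r<K. relu (zz d K (i*(2*K) + r) x)) + (\<Sum>r<K. relu (zz d K (i*(2*K) + (K + r)) x))
      = (\<Sum>k<K. relu ((x i + x (d + i)) - 2 * real k / real K))
           + (\<Sum>k<K. relu (- (x i + x (d + i)) - 2 * real k / real K))"
      using e1 e2 by simp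
  qed
  finally show ?thesis .
qed

lemma SS_approx:
  assumes x: "x \<in> Xd d" and K: "K \<ge> 1"
  shows "\<bar>SS d K x - sqrt (real d) * inner12 d x\<bar> \<le> 4 * real d * sqrt (real d) / real K"
proof -
  define u where "u i = x i + x (d + i)" for i
  define F where "F v = (\<Sum>k<K. 4 / real K * relu (v - 2 * real k / real K))" for v
  define E where "E i = (F (u i) - (relu (u i))\<^sup>2) + (F (- u i) - (relu (- u i))\<^sup>2)" for i
  have Fh: "2 / real K * (\<Sum>k<K. relu (v - 2 * real k / real K)) = F v / 2" for v
    unfolding F_def sum_distrib_left sum_divide_distrib by (rule sum.cong) auto
  have usq: "(\<Sum>i<d. (u i)\<^sup>2) = 2 + 2 * inner12 d x"
  proof -
    have "(\<Sum>i<d. (u i)\<^sup>2) = (\<Sum>i<d. (x i)\<^sup>2) + (\<Sum>i<d. (x (d + i))\<^sup>2) + 2 * (\<Sum>i<d. x i * x (d + i))"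
      unfolding u_def power2_sum by (simp add: sum.distrib sum_distrib_left mult.assoc)
    then show ?thesis using x by (simp add: Xd_def inner12_def)
  qed
  have SSe: "SS d K x = sqrt (real d) * ((\<Sum>i<d. F (u i) + F (- u i)) / 2 - 1)"
  proof -
    have "SS d K x = sqrt (real d) * (2 / real K * (\<Sum>j<d*(2*K). relu (zz d K j x))) - sqrt (real d)"
      unfolding SS_def by simp
    also have "2 / real K * (\<Sum>j<d*(2*K). relu (zz d K j x)) = (\<Sum>i<d. F (u i) + F (- u i)) / 2"
    proof -
      define A where "A v = (\<Sum>k<K. relu (v - 2 * real k / real K))" for v
      have Fh': "2 / real K * A v = F v / 2" for v unfolding A_def by (rule Fh)
      have "(\<Sum>j<d*(2*K). relu (zz d K j x)) = (\<Sum>i<d. A (u i) + A (- u i))"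
        unfolding blk_sum[OF K] A_def u_def by simp
      then have "2 / real K * (\<Sum>j<d*(2*K). relu (zz d K j x)) = (\<Sum>i<d. 2 / real K * A (u i) + 2 / real K * A (- u i))"
        by (simp add: sum_distrib_left distrib_left)
      also have "\<dots> = (\<Sum>i<d. F (u i) / 2 + F (- u i) / 2)" unfolding Fh' ..
      finally show ?thesis by (simp add: sum_divide_distrib add_divide_distrib)
    qed
    finally show ?thesis by (simp add: algebra_simps)
  qed
  have diff: "SS d K x - sqrt (real d) * inner12 d x = sqrt (real d) / 2 * (\<Sum>i<d. E i)"
  proof -
    have "(\<Sum>i<d. E i) = (\<Sum>i<d. F (u i) + F (- u i)) - (\<Sum>i<d. (u i)\<^sup>2)"
      unfolding sum_subtractf[symmetric]
    proof (rule sum.cong[OF refl])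
      fix i
      show "E i = F (u i) + F (- u i) - (u i)\<^sup>2"
        unfolding E_def using relu_sq_split[of "u i"] by (simp add: algebra_simps)
    qed
    then have h: "(\<Sum>i<d. F (u i) + F (- u i)) = (\<Sum>i<d. E i) + 2 + 2 * inner12 d x"
      using usq by linarith
    show ?thesis unfolding SSe h by (simp add: algebra_simps)
  qed
  have Eb: "\<bar>E i\<bar> \<le> 8 / real K" if i: "i < d" for i
  proof -
    have "\<bar>u i\<bar> \<le> 2" using Xd_bound[OF x i] unfolding u_def by linarith
    then have "u i \<le> 2" "- u i \<le> 2" by auto
    from F_approx[OF K this(1)] F_approx[OF K this(2)]
    show ?thesis unfolding E_def F_def by linarith
  qed
  have "\<bar>\<Sum>i<d. E i\<bar> \<le> (\<Sum>i<d. 8 / real K)"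
    by (rule order_trans[OF sum_abs]) (rule sum_mono, simp add: Eb)
  then have "\<bar>\<Sum>i<d. E i\<bar> \<le> real d * 8 / real K" by simp
  then have "sqrt (real d) / 2 * \<bar>\<Sum>i<d. E i\<bar> \<le> sqrt (real d) / 2 * (real d * 8 / real K)"
    by (intro mult_left_mono) auto
  then show ?thesis unfolding diff by (simp add: abs_mult)
qed


lemma qq_ge1: "d \<ge> 1 \<Longrightarrow> qq d \<ge> 1" by (simp add: qq_def)

lemma powr52: "d \<ge> 1 \<Longrightarrow> real d powr (5/2) = qq d ^ 10"
proof -
  assume d: "d \<ge> 1"
  have "real d powr (5/2) = real d powr (2 + 1/2)" by simp
  also have "\<dots> = real d powr 2 * real d powr (1/2)" by (rule powr_add)
  also have "\<dots> = real d ^ 2 * sqrt (real d)" using d by (simp add: powr_half_sqrt)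
  also have "\<dots> = (qq d ^ 4) ^ 2 * qq d ^ 2" by (simp add: qq_4 qq_sq)
  also have "\<dots> = qq d ^ 10" by (simp add: power_mult[symmetric] power_add[symmetric])
  finally show ?thesis .
qed

lemma cc_bound: "1 \<le> j \<Longrightarrow> j \<le> n \<Longrightarrow> \<bar>cc n j\<bar> \<le> 1"
proof -
  assume j1: "1 \<le> j" and jn: "j \<le> n"
  have n: "real n > 0" using j1 jn by simp
  have a: "real j \<le> real n" using jn by simp
  have b: "1 \<le> real j" using j1 by simp
  have "2 * real j - 1 \<le> 2 * real n" using a by linarith
  moreover have "0 \<le> 2 * real j - 1" using b by linarith
  ultimately show ?thesis unfolding cc_def using n by (simp add: divide_le_eq_1 abs_div_pos)
qed

lemma sawT_bound: "\<bar>sawT n m\<bar> \<le> 1"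
proof -
  have "\<bar>cc n (m div 2 + 1)\<bar> \<le> 1" if "m < 2*n"
    by (rule cc_bound) (use that in linarith)+
  then show ?thesis unfolding sawT_def by auto
qed

lemma sawA_bound: "\<bar>sawA n m\<bar> \<le> 4 * real n"
  unfolding sawA_def by (auto simp: abs_mult)

lemma sq_helper: "(t::real)\<^sup>2 \<le> 2\<^sup>2 \<Longrightarrow> (- a * t)\<^sup>2 \<le> 4 * a\<^sup>2"
proof -
  assume h: "t\<^sup>2 \<le> 2\<^sup>2"
  have "(- a * t)\<^sup>2 = a\<^sup>2 * t\<^sup>2" by (simp add: power_mult_distrib)
  also have "\<dots> \<le> a\<^sup>2 * 2\<^sup>2" using h by (intro mult_left_mono) auto
  finally show ?thesis by simp
qed

lemma norm_bound:
  assumes d: "d \<ge> 2" and K: "K \<ge> 1"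
  shows "param_norm2 d (d*(2*K)) (2*(3*d)+2) (phi d K) \<le> 1260 * qq d ^ 10"
proof -
  define q where "q = qq d"
  define a where "a = al d K"
  have d1: "d \<ge> 1" using d by simp
  have q1: "q \<ge> 1" using qq_ge1[OF d1] by (simp add: q_def)
  have q4: "real d = q ^ 4" by (simp add: q_def qq_4)
  have a2: "a ^ 2 = q ^ 5 / real K" using al_sq[OF d1] by (simp add: a_def q_def)
  have a0: "a > 0" using al_pos[OF d1 K] by (simp add: a_def)
  have Kp: "real K > 0" using K by simp
  have m1: "real (d*(2*K)) = 2 * q^4 * real K" using q4 by simp
  have m2: "real (2*(3*d)+2) \<le> 8 * q^4" using q4 d by simp
  have q9: "q^9 \<le> q^10" using q1 by (simp add: power_increasing)
  have t1j: "(\<Sum>i<2*d. (if i = iI K j \<or> i = d + iI K j then a * sG K j else 0)\<^sup>2) = 2 * a^2"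
    if j: "j < d*(2*K)" for j
  proof -
    let ?c = "iI K j"
    have c: "?c < d" using iI_less[OF j] .
    have sg: "(sG K j)\<^sup>2 = 1" by (simp add: sG_def)
    have "(\<Sum>i<2*d. (if i = ?c \<or> i = d + ?c then a * sG K j else 0)\<^sup>2)
       = (\<Sum>i<2*d. (if i = ?c \<or> i = d + ?c then a^2 else 0))"
      by (rule sum.cong) (auto simp: power_mult_distrib sg)
    also have "\<dots> = (\<Sum>i\<in>{i\<in>{..<2*d}. i = ?c \<or> i = d + ?c}. a^2)"
      by (rule sum.inter_filter[symmetric]) simp
    also have "{i\<in>{..<2*d}. i = ?c \<or> i = d + ?c} = {?c, d + ?c}" using c by auto
    finally show ?thesis using c by simp
  qed
  have T1: "(\<Sum>j<d*(2*K). \<Sum>i<2*d. (if i = iI K j \<or> i = d + iI K j then a * sG K j else 0)\<^sup>2) = 4 * q^9"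
  proof -
    have "(\<Sum>j<d*(2*K). \<Sum>i<2*d. (if i = iI K j \<or> i = d + iI K j then a * sG K j else 0)\<^sup>2)
        = (\<Sum>j<d*(2*K). 2 * a^2)" by (rule sum.cong) (auto simp: t1j)
    also have "\<dots> = real (d*(2*K)) * (2 * a^2)" by simp
    also have "\<dots> = 4 * q^9" unfolding m1 a2 using Kp by (simp add: field_simps power_add[symmetric])
    finally show ?thesis .
  qed
  have T2: "(\<Sum>j<d*(2*K). (- a * (2 * real (kK K j) / real K))\<^sup>2) \<le> 8 * q^9"
  proof -
    have "(\<Sum>j<d*(2*K). (- a * (2 * real (kK K j) / real K))\<^sup>2) \<le> (\<Sum>j<d*(2*K). 4 * a^2)"
    proof (rule sum_mono)
      fix j
      have k: "kK K j < K" using K by (simp add: kK_def)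
      have "2 * real (kK K j) / real K \<le> 2" using k Kp by (simp add: divide_le_eq)
      moreover have "0 \<le> 2 * real (kK K j) / real K" by simp
      ultimately have "(2 * real (kK K j) / real K)\<^sup>2 \<le> 2\<^sup>2" by (rule power_mono)
      then show "(- a * (2 * real (kK K j) / real K))\<^sup>2 \<le> 4 * a^2"
        by (rule sq_helper)
    qed
    also have "\<dots> = real (d*(2*K)) * (4 * a^2)" by simp
    also have "\<dots> = 8 * q^9" unfolding m1 a2 using Kp by (simp add: field_simps power_add[symmetric])
    finally show ?thesis .
  qed
  have T3: "(\<Sum>m<2*(3*d)+2. \<Sum>j<d*(2*K). (2 * q ^ 3 / (real K * a))\<^sup>2) \<le> 64 * q^9"
  proof -
    have e: "real (d*(2*K)) * (2 * q ^ 3 / (real K * a))\<^sup>2 = 8 * q^5"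
    proof -
      have "(2 * q ^ 3 / (real K * a))\<^sup>2 = 4 * q^6 / (real K ^ 2 * a^2)"
        by (simp add: power_divide power_mult_distrib power_mult[symmetric])
      also have "\<dots> = 4 * q / real K" unfolding a2 using Kp q1
        by (simp add: field_simps power2_eq_square power_add[symmetric] eval_nat_numeral)
      finally have sq: "(2 * q ^ 3 / (real K * a))\<^sup>2 = 4 * q / real K" .
      have "2 * q^4 * real K * (4 * q / real K) = 8 * (q^4 * q)" using Kp by (simp add: field_simps)
      also have "q^4 * q = q^5" by (simp add: eval_nat_numeral)
      finally show ?thesis unfolding m1 sq .
    qed
    have "(\<Sum>m<2*(3*d)+2. \<Sum>j<d*(2*K). (2 * q ^ 3 / (real K * a))\<^sup>2) = real (2*(3*d)+2) * (8 * q^5)"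
      using e by simp
    also have "\<dots> \<le> 8 * q^4 * (8 * q^5)" using m2 q1 by (intro mult_right_mono) auto
    also have "\<dots> = 64 * q^9" by (simp add: power_add[symmetric])
    finally show ?thesis .
  qed
  have T4: "(\<Sum>m<2*(3*d)+2. (- q * (sqrt (real d) + sawT (3*d) m))\<^sup>2) \<le> 32 * q^10"
  proof -
    have "(\<Sum>m<2*(3*d)+2. (- q * (sqrt (real d) + sawT (3*d) m))\<^sup>2) \<le> (\<Sum>m<2*(3*d)+2. 4 * q^6)"
    proof (rule sum_mono)
      fix m
      have sq: "sqrt (real d) = q^2" by (simp add: q_def qq_sq)
      have q2: "q^2 \<ge> 1" using q1 by simp
      have t: "\<bar>sawT (3*d) m\<bar> \<le> 1" by (rule sawT_bound)
      have "(q^2 + sawT (3*d) m)\<^sup>2 \<le> (2 * q^2)\<^sup>2"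
        using t q2 by (intro power_mono) auto
      then have "q^2 * (q^2 + sawT (3*d) m)\<^sup>2 \<le> q^2 * (2 * q^2)\<^sup>2"
        by (intro mult_left_mono) auto
      moreover have "q^2 * (2 * q^2)\<^sup>2 = 4 * q^6" by (simp add: eval_nat_numeral)
      moreover have "(- q * (sqrt (real d) + sawT (3*d) m))\<^sup>2 = q^2 * (q^2 + sawT (3*d) m)\<^sup>2"
        unfolding sq by (simp add: power_mult_distrib)
      ultimately show "(- q * (sqrt (real d) + sawT (3*d) m))\<^sup>2 \<le> 4 * q^6" by linarith
    qed
    also have "\<dots> = real (2*(3*d)+2) * (4 * q^6)" by simp
    also have "\<dots> \<le> 8 * q^4 * (4 * q^6)" using m2 q1 by (intro mult_right_mono) auto
    also have "\<dots> = 32 * q^10" by (simp add: power_add[symmetric])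
    finally show ?thesis .
  qed
  have T5: "(\<Sum>m<2*(3*d)+2. (sawA (3*d) m / q)\<^sup>2) \<le> 1152 * q^10"
  proof -
    have "(\<Sum>m<2*(3*d)+2. (sawA (3*d) m / q)\<^sup>2) \<le> (\<Sum>m<2*(3*d)+2. 144 * q^6)"
    proof (rule sum_mono)
      fix m
      have "\<bar>sawA (3*d) m\<bar> \<le> 12 * q^4" using sawA_bound[of "3*d" m] q4 by simp
      then have "(sawA (3*d) m)\<^sup>2 \<le> (12 * q^4)\<^sup>2"
        by (metis abs_ge_zero order_trans power2_abs power_mono)
      then have "(sawA (3*d) m)\<^sup>2 / q^2 \<le> (12 * q^4)\<^sup>2 / q^2"
        using q1 by (intro divide_right_mono) auto
      also have "\<dots> = 144 * q^6" using q1 by (simp add: power_mult_distrib power_mult[symmetric] field_simps eval_nat_numeral)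
      finally show "(sawA (3*d) m / q)\<^sup>2 \<le> 144 * q^6" by (simp add: power_divide)
    qed
    also have "\<dots> = real (2*(3*d)+2) * (144 * q^6)" by simp
    also have "\<dots> \<le> 8 * q^4 * (144 * q^6)" using m2 q1 by (intro mult_right_mono) auto
    also have "\<dots> = 1152 * q^10" by (simp add: power_add[symmetric])
    finally show ?thesis .
  qed
  have "param_norm2 d (d*(2*K)) (2*(3*d)+2) (phi d K)
     = (\<Sum>j<d*(2*K). \<Sum>i<2*d. (if i = iI K j \<or> i = d + iI K j then a * sG K j else 0)\<^sup>2)
     + (\<Sum>j<d*(2*K). (- a * (2 * real (kK K j) / real K))\<^sup>2)
     + (\<Sum>m<2*(3*d)+2. \<Sum>j<d*(2*K). (2 * q ^ 3 / (real K * a))\<^sup>2)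
     + (\<Sum>m<2*(3*d)+2. (- q * (sqrt (real d) + sawT (3*d) m))\<^sup>2)
     + (\<Sum>m<2*(3*d)+2. (sawA (3*d) m / q)\<^sup>2) + 0\<^sup>2"
    unfolding phi_def param_norm2.simps a_def q_def by (rule refl)
  also have "\<dots> \<le> 4 * q^9 + 8 * q^9 + 64 * q^9 + 32 * q^10 + 1152 * q^10 + 0"
    using T1 T2 T3 T4 T5 zero_power2[where 'a=real] by linarith
  also have "\<dots> \<le> 1260 * q^10" using q9 by simp
  finally show ?thesis by (simp add: q_def)
qed

lemma norm_nonneg: "param_norm2 d m1 m2 p \<ge> 0"
  by (cases p) (auto intro!: add_nonneg_nonneg sum_nonneg)

lemma R3_le:
  assumes "m1 \<le> \<omega>" "m2 \<le> \<omega>" "\<forall>x\<in>Xd d. net_eval d m1 m2 p x = f x"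
  shows "R3 d f \<omega> \<le> param_norm2 d m1 m2 p / 3"
  unfolding R3_def
proof (rule cInf_lower)
  show "param_norm2 d m1 m2 p / 3 \<in> {param_norm2 d m1 m2 \<phi> / 3 | m1 m2 \<phi>.
      m1 \<le> \<omega> \<and> m2 \<le> \<omega> \<and> (\<forall>x\<in>Xd d. net_eval d m1 m2 \<phi> x = f x)}"
    using assms by blast
  show "bdd_below {param_norm2 d m1 m2 \<phi> / 3 | m1 m2 \<phi>.
      m1 \<le> \<omega> \<and> m2 \<le> \<omega> \<and> (\<forall>x\<in>Xd d. net_eval d m1 m2 \<phi> x = f x)}"
  proof (rule bdd_belowI[of _ 0])
    fix y assume "y \<in> {param_norm2 d m1 m2 \<phi> / 3 | m1 m2 \<phi>.
      m1 \<le> \<omega> \<and> m2 \<le> \<omega> \<and> (\<forall>x\<in>Xd d. net_eval d m1 m2 \<phi> x = f x)}"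
    then obtain m1' m2' p' where "y = param_norm2 d m1' m2' p' / 3" by blast
    then show "0 \<le> y" using norm_nonneg[of d m1' m2' p'] by simp
  qed
qed

theorem lemma14:
  shows "\<exists>C1 C2 :: real. \<forall>d K :: nat. d \<ge> 2 \<longrightarrow> K \<ge> 1 \<longrightarrow>
    (\<exists>m1 m2 (\<phi> :: params).
       m1 \<le> max (6 * d + 2) (2 * K * d) \<and> m2 \<le> max (6 * d + 2) (2 * K * d) \<and>
       (\<forall>x\<in>Xd d. \<bar>f_target d x - net_eval d m1 m2 \<phi> x\<bar> \<le> C1 * real d powr (5/2) / real K) \<and>
       R3 d (net_eval d m1 m2 \<phi>) (max (6 * d + 2) (2 * K * d)) \<le> C2 * real d powr (5/2))"
proof (intro exI allI impI)
  fix d K :: nat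
  assume d: "d \<ge> 2" and K: "K \<ge> 1"
  have d1: "d \<ge> 1" using d by simp
  let ?w = "max (6 * d + 2) (2 * K * d)"
  have w1: "d*(2*K) \<le> ?w" by (simp add: mult.commute mult.left_commute)
  have w2: "2*(3*d)+2 \<le> ?w" by simp
  have err: "\<bar>f_target d x - net_eval d (d*(2*K)) (2*(3*d)+2) (phi d K) x\<bar> \<le> 144 * real d powr (5/2) / real K"
    if x: "x \<in> Xd d" for x
  proof -
    have "\<bar>f_target d x - net_eval d (d*(2*K)) (2*(3*d)+2) (phi d K) x\<bar>
        = \<bar>sawtooth (3*d) (sqrt (real d) * inner12 d x) - sawtooth (3*d) (SS d K x)\<bar>"
      unfolding f_target_def net_is_saw[OF d1 K] ..
    also have "\<dots> \<le> 12 * real (3*d) * \<bar>sqrt (real d) * inner12 d x - SS d K x\<bar>" by (rule saw_lip)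
    also have "\<dots> \<le> 12 * real (3*d) * (4 * real d * sqrt (real d) / real K)"
      using SS_approx[OF x K] by (intro mult_left_mono) (auto simp: abs_minus_commute)
    also have "\<dots> = 144 * (real d ^ 2 * sqrt (real d)) / real K" by (simp add: power2_eq_square)
    also have "real d ^ 2 * sqrt (real d) = real d powr (5/2)"
    proof -
      have "real d ^ 2 * sqrt (real d) = (qq d ^ 4) ^ 2 * qq d ^ 2" by (simp only: qq_4 qq_sq)
      also have "\<dots> = qq d ^ 10" by (simp add: power_mult[symmetric] power_add[symmetric])
      finally show ?thesis using powr52[OF d1] by simp
    qed
    finally show ?thesis .
  qed
  have R: "R3 d (net_eval d (d*(2*K)) (2*(3*d)+2) (phi d K)) ?w \<le> 420 * real d powr (5/2)"
  proof -
    have "R3 d (net_eval d (d*(2*K)) (2*(3*d)+2) (phi d K)) ?w \<le> param_norm2 d (d*(2*K)) (2*(3*d)+2) (phi d K) / 3"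
      by (rule R3_le[OF w1 w2]) simp
    also have "\<dots> \<le> 1260 * qq d ^ 10 / 3" using norm_bound[OF d K] by simp
    also have "\<dots> = 420 * real d powr (5/2)" using powr52[OF d1] by simp
    finally show ?thesis .
  qed
  show "d*(2*K) \<le> ?w \<and> 2*(3*d)+2 \<le> ?w \<and>
       (\<forall>x\<in>Xd d. \<bar>f_target d x - net_eval d (d*(2*K)) (2*(3*d)+2) (phi d K) x\<bar> \<le> 144 * real d powr (5/2) / real K) \<and>
       R3 d (net_eval d (d*(2*K)) (2*(3*d)+2) (phi d K)) ?w \<le> 420 * real d powr (5/2)"
    using w1 w2 err R by blast
qed

end
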